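(* Let $X$ be a finite set and let $c$ be a choice correspondence on $X$. If $c$ is rational, then $r^{c}(A)=c(A)$ for every menu $A$.
   Context: A menu is a nonempty subset of $X$. A choice correspondence is a map $c$ assigning to each menu $A$ a nonempty subset $c(A)\subseteq A$. A weak order is a complete and transitive binary relation on $X$. For a weak order $R$ and menu $A$, $\max(A,R)=\{x\in A: xRy \text{ for all } y\in A\}$. The choice correspondence $c$ is rational if there exists a weak order $R$ on $X$ with $c(A)=\max(A,R)$ for every menu $A$. For a menu $A$, $r^{c}(A)=\{x\in A: c(A\setminus\{x\})\neq c(A)\}$ (with the convention that for a singleton $A=\{x\}$ the removal of $x$ counts as changing the choice, so $r^c(\{x\})=\{x\}$; in particular $c(A)\subseteq r^c(A)$ always). *)

theory Defs
  imports Main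
begin

definition menu :: "'a set \<Rightarrow> 'a set \<Rightarrow> bool" where
  "menu X A \<longleftrightarrow> A \<noteq> {} \<and> A \<subseteq> X"

definition choice_corr :: "'a set \<Rightarrow> ('a set \<Rightarrow> 'a set) \<Rightarrow> bool" where
  "choice_corr X c \<longleftrightarrow> (\<forall>A. menu X A \<longrightarrow> c A \<noteq> {} \<and> c A \<subseteq> A)"

definition weak_order :: "'a set \<Rightarrow> ('a \<Rightarrow> 'a \<Rightarrow> bool) \<Rightarrow> bool" where
  "weak_order X R \<longleftrightarrow>
     (\<forall>x\<in>X. \<forall>y\<in>X. R x y \<or> R y x) \<and>
     (\<forall>x\<in>X. \<forall>y\<in>X. \<forall>z\<in>X. R x y \<longrightarrow> R y z \<longrightarrow> R x z)"

definition maxR :: "'a set \<Rightarrow> ('a \<Rightarrow> 'a \<Rightarrow> bool) \<Rightarrow> 'a set" where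
  "maxR A R = {x \<in> A. \<forall>y\<in>A. R x y}"

definition rational :: "'a set \<Rightarrow> ('a set \<Rightarrow> 'a set) \<Rightarrow> bool" where
  "rational X c \<longleftrightarrow> (\<exists>R. weak_order X R \<and> (\<forall>A. menu X A \<longrightarrow> c A = maxR A R))"

(* r^c(A); removing x from a singleton {x} counts as changing the choice *)
definition rc :: "('a set \<Rightarrow> 'a set) \<Rightarrow> 'a set \<Rightarrow> 'a set" where
  "rc c A = {x \<in> A. A - {x} = {} \<or> c (A - {x}) \<noteq> c A}"

end

theory Submission
  imports Defs
begin

theorem lemma3:
  fixes X :: "'a set" and c :: "'a set \<Rightarrow> 'a set"
  assumes "finite X"
    and "choice_corr X c"
    and "rational X c"
    and "menu X A"
  shows "rc c A = c A"
proof -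
  obtain R where wo: "weak_order X R" and cR: "\<And>B. menu X B \<Longrightarrow> c B = maxR B R"
    using assms(3) unfolding rational_def by blast
  have AX: "A \<subseteq> X" "A \<noteq> {}" using assms(4) unfolding menu_def by auto
  have tot: "\<And>x y. x \<in> X \<Longrightarrow> y \<in> X \<Longrightarrow> R x y \<or> R y x" using wo unfolding weak_order_def by blast
  have tr: "\<And>x y z. x \<in> X \<Longrightarrow> y \<in> X \<Longrightarrow> z \<in> X \<Longrightarrow> R x y \<Longrightarrow> R y z \<Longrightarrow> R x z"
    using wo unfolding weak_order_def by blast
  have cA: "c A = maxR A R" using cR assms(4) by blast
  have ne: "c A \<noteq> {}" using assms(2,4) unfolding choice_corr_def by blast
  show ?thesis
  proof
    show "rc c A \<subseteq> c A"
    proof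
      fix x assume x: "x \<in> rc c A"
      hence xA: "x \<in> A" unfolding rc_def by blast
      show "x \<in> c A"
      proof (rule ccontr)
        assume nx: "x \<notin> c A"
        obtain m where m: "m \<in> c A" using ne by blast
        have mx: "m \<noteq> x" using m nx by blast
        have mA: "m \<in> A" using m cA unfolding maxR_def by blast
        have ne2: "A - {x} \<noteq> {}" using mA mx by blast
        have menu2: "menu X (A - {x})" using ne2 AX unfolding menu_def by blast
        obtain y where yA: "y \<in> A" and nR: "\<not> R x y"
          using nx xA cA unfolding maxR_def by blast
        have Ryx: "R y x" using tot nR yA xA AX by blast
        have yx: "y \<noteq> x" using tot[of x x] xA AX nR by blast
        have "maxR (A - {x}) R = maxR A R"
        proof
          show "maxR A R \<subseteq> maxR (A - {x}) R" using nx cA unfolding maxR_def by blast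
        next
          show "maxR (A - {x}) R \<subseteq> maxR A R"
          proof
            fix z assume z: "z \<in> maxR (A - {x}) R"
            hence zA: "z \<in> A - {x}" and zall: "\<forall>w\<in>A - {x}. R z w" unfolding maxR_def by auto
            have "R z y" using zall yA yx by blast
            hence "R z x" using tr[of z y x] zA yA xA AX Ryx by blast
            thus "z \<in> maxR A R" using zA zall unfolding maxR_def by blast
          qed
        qed
        hence "c (A - {x}) = c A" using cR[OF menu2] cA by simp
        thus False using x ne2 unfolding rc_def by blast
      qed
    qed
  next
    show "c A \<subseteq> rc c A"
    proof
      fix x assume x: "x \<in> c A"
      hence xA: "x \<in> A" using cA unfolding maxR_def by blast
      show "x \<in> rc c A"
      proof (cases "A - {x} = {}")
        case True thus ?thesis using xA unfolding rc_def by blast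
      next
        case False
        hence menu2: "menu X (A - {x})" using AX unfolding menu_def by blast
        have "x \<notin> c (A - {x})" using cR[OF menu2] unfolding maxR_def by blast
        thus ?thesis using x xA unfolding rc_def by blast
      qed
    qed
  qed
qed

end
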